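(* Let $S_X,S_Y$ be finite nonempty action sets, $\lambda\in[0,1)$, and let $\varphi(s_X,s_Y)=\phi_X(s_X)+\phi_Y(s_Y)$ be additive. Let $\tau_X^+,\tau_X^-\in\Delta(S_X)$ satisfy $$\min_{s_Y}\varphi(\tau_X^+,s_Y)\ge(1-\lambda)\max_{s_Y}\varphi(\tau_X^+,s_Y)+\lambda\max_{s_Y}\varphi(\tau_X^-,s_Y),$$ $$\max_{s_Y}\varphi(\tau_X^-,s_Y)\le\lambda\min_{s_Y}\varphi(\tau_X^+,s_Y)+(1-\lambda)\min_{s_Y}\varphi(\tau_X^-,s_Y).$$ Then for every $K\in\big[\phi_X(\tau_X^-)+\max_{s_Y}\phi_Y(s_Y),\ \phi_X(\tau_X^+)+\min_{s_Y}\phi_Y(s_Y)\big]$ there exist $p_0\in[0,1]$ and $p^*:S_Y\to[0,1]$ such that the two-point reactive strategy which plays $p_0\tau_X^++(1-p_0)\tau_X^-$ in round $0$ and $\sigma_X^*[s_Y]=p^*[s_Y]\tau_X^++(1-p^*[s_Y])\tau_X^-$ in round $t+1$ after $Y$ played $s_Y$ in round $t$ enforces $\varphi\equiv K$, i.e., is $(\varphi-K,\lambda)$-autocratic.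
   Context: Two players $X,Y$ play a repeated game with finite action sets $S_X,S_Y$; $\Delta(S)$ denotes the probability distributions on $S$. Additive means $\phi_X:S_X\to\mathbb{R}$, $\phi_Y:S_Y\to\mathbb{R}$ with $\varphi(s_X,s_Y)=\phi_X(s_X)+\phi_Y(s_Y)$; $\phi_X(\tau_X)=\mathbb{E}_{s_X\sim\tau_X}[\phi_X(s_X)]$ and $\varphi(\tau_X,s_Y)=\mathbb{E}_{s_X\sim\tau_X}[\varphi(s_X,s_Y)]$; maxima/minima over $s_Y$ are over $S_Y$. Histories: $\mathcal{H}=\bigcup_{T\ge0}(S_X\times S_Y)^T$; behavioral strategies are maps $\sigma:\mathcal{H}\to\Delta(S)$; players independently draw actions each round from their strategies evaluated at the history of realized action pairs, with $\mathbb{E}_{\sigma_X,\sigma_Y}$ the expectation over the resulting play. For $f:S_X\times S_Y\to\mathbb{R}$, $\sigma_X$ is $(f,\lambda)$-autocratic if for every behavioral strategy $\sigma_Y$ of $Y$, $\mathbb{E}_{\sigma_X,\sigma_Y}[(1-\lambda)\sum_{t\ge0}\lambda^tf(s_X^t,s_Y^t)]=0$. *)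

theory Defs
  imports "HOL-Probability.Probability"
begin

text \<open>Histories are lists of realized action pairs (oldest first); behavioral
strategies map histories to distributions over own actions.\<close>

type_synonym ('x, 'y) history = "('x \<times> 'y) list"

definition mix :: "real \<Rightarrow> 'a pmf \<Rightarrow> 'a pmf \<Rightarrow> 'a pmf" where
  "mix p \<tau>1 \<tau>2 = bind_pmf (bernoulli_pmf p) (\<lambda>b. if b then \<tau>1 else \<tau>2)"

fun hist_dist :: "(('x, 'y) history \<Rightarrow> 'x pmf) \<Rightarrow> (('x, 'y) history \<Rightarrow> 'y pmf)
    \<Rightarrow> nat \<Rightarrow> ('x, 'y) history pmf" where
  "hist_dist \<sigma>X \<sigma>Y 0 = return_pmf []"
| "hist_dist \<sigma>X \<sigma>Y (Suc t) =
     bind_pmf (hist_dist \<sigma>X \<sigma>Y t) (\<lambda>h.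
       bind_pmf (\<sigma>X h) (\<lambda>x. bind_pmf (\<sigma>Y h) (\<lambda>y. return_pmf (h @ [(x, y)]))))"

definition round_exp :: "('x \<Rightarrow> 'y \<Rightarrow> real) \<Rightarrow> (('x, 'y) history \<Rightarrow> 'x pmf)
    \<Rightarrow> (('x, 'y) history \<Rightarrow> 'y pmf) \<Rightarrow> nat \<Rightarrow> real" where
  "round_exp f \<sigma>X \<sigma>Y t =
     measure_pmf.expectation (hist_dist \<sigma>X \<sigma>Y t) (\<lambda>h.
       measure_pmf.expectation (\<sigma>X h) (\<lambda>x.
         measure_pmf.expectation (\<sigma>Y h) (\<lambda>y. f x y)))"

text \<open>Expected normalized discounted payoff
  E[(1-lambda) sum_t lambda^t f(s^t)] (f bounded, so the expectation of the sum
  is the sum of the per-round expectations).\<close>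
definition disc_payoff :: "('x \<Rightarrow> 'y \<Rightarrow> real) \<Rightarrow> real \<Rightarrow> (('x, 'y) history \<Rightarrow> 'x pmf)
    \<Rightarrow> (('x, 'y) history \<Rightarrow> 'y pmf) \<Rightarrow> real" where
  "disc_payoff f lam \<sigma>X \<sigma>Y = (1 - lam) * (\<Sum>t. lam ^ t * round_exp f \<sigma>X \<sigma>Y t)"

definition autocratic :: "('x \<Rightarrow> 'y \<Rightarrow> real) \<Rightarrow> real \<Rightarrow> (('x, 'y) history \<Rightarrow> 'x pmf) \<Rightarrow> bool" where
  "autocratic f lam \<sigma>X \<longleftrightarrow> (\<forall>\<sigma>Y :: ('x, 'y) history \<Rightarrow> 'y pmf. disc_payoff f lam \<sigma>X \<sigma>Y = 0)"

definition reactive :: "real \<Rightarrow> ('y \<Rightarrow> real) \<Rightarrow> 'x pmf \<Rightarrow> 'x pmf \<Rightarrow> ('x, 'y) history \<Rightarrow> 'x pmf" where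
  "reactive p0 pstar \<tau>p \<tau>m h =
     (if h = [] then mix p0 \<tau>p \<tau>m else mix (pstar (snd (last h))) \<tau>p \<tau>m)"

definition phi_mixed :: "('x \<Rightarrow> real) \<Rightarrow> ('y \<Rightarrow> real) \<Rightarrow> 'x pmf \<Rightarrow> 'y \<Rightarrow> real" where
  "phi_mixed \<phi>X \<phi>Y \<tau> y = measure_pmf.expectation \<tau> (\<lambda>x. \<phi>X x + \<phi>Y y)"

end

theory Submission
  imports Defs
begin

lemma integrable_pmf_bounded:
  fixes f :: "'a \<Rightarrow> real"
  assumes "\<And>x. \<bar>f x\<bar> \<le> B"
  shows "integrable (measure_pmf M) f"
  by (rule measure_pmf.integrable_const_bound[where B=B]) (use assms in auto)

lemma integral_bind_pmf_real:
  fixes f :: "'b \<Rightarrow> real"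
  assumes "\<And>y. \<bar>f y\<bar> \<le> B"
  shows "measure_pmf.expectation (bind_pmf M N) f =
         measure_pmf.expectation M (\<lambda>x. measure_pmf.expectation (N x) f)"
  using measurable_measure_pmf[of N]
  unfolding measure_pmf_bind
  by (intro integral_bind[where K="count_space UNIV" and B=B and B'=1]) (use assms in auto)

lemma mono_add_Min: "Min (range (\<lambda>y::'y::finite. c + (g y::real))) = c + Min (range g)"
proof -
  have "range (\<lambda>y. c + g y) = (\<lambda>z. c + z) ` range g" by auto
  then show ?thesis by (simp add: mono_Min_commute[symmetric] mono_def)
qed

lemma mono_add_Max: "Max (range (\<lambda>y::'y::finite. c + (g y::real))) = c + Max (range g)"
proof -
  have "range (\<lambda>y. c + g y) = (\<lambda>z. c + z) ` range g" by auto
  then show ?thesis by (simp add: mono_Max_commute[symmetric] mono_def)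
qed

lemma phi_mixed_eq:
  fixes \<phi>X :: "'x::finite \<Rightarrow> real"
  shows "phi_mixed \<phi>X \<phi>Y \<tau> = (\<lambda>y. measure_pmf.expectation \<tau> \<phi>X + \<phi>Y y)"
  unfolding phi_mixed_def
  by (rule ext, subst Bochner_Integration.integral_add) (auto intro: integrable_measure_pmf_finite)

lemma mix_exp:
  fixes f :: "'x::finite \<Rightarrow> real"
  assumes "0 \<le> p" "p \<le> 1"
  shows "measure_pmf.expectation (mix p \<tau>1 \<tau>2) f =
     p * measure_pmf.expectation \<tau>1 f + (1 - p) * measure_pmf.expectation \<tau>2 f"
proof -
  have B: "\<And>y. \<bar>f y\<bar> \<le> Max (range (\<lambda>x. \<bar>f x\<bar>))" by (intro Max_ge) auto
  show ?thesis unfolding mix_def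
    by (subst integral_bind_pmf_real[OF B]) (use assms in auto)
qed

lemma exp_lin:
  fixes f g :: "'a \<Rightarrow> real"
  assumes "\<And>x. \<bar>f x\<bar> \<le> B1" "\<And>x. \<bar>g x\<bar> \<le> B2"
  shows "measure_pmf.expectation M (\<lambda>x. f x + g x - c) =
         measure_pmf.expectation M f + measure_pmf.expectation M g - c"
proof -
  have i1: "integrable (measure_pmf M) f" by (rule integrable_pmf_bounded[OF assms(1)])
  have i2: "integrable (measure_pmf M) g" by (rule integrable_pmf_bounded[OF assms(2)])
  have "measure_pmf.expectation M (\<lambda>x. f x + g x - c) =
        measure_pmf.expectation M (\<lambda>x. f x + g x) - measure_pmf.expectation M (\<lambda>x. c)"
    by (rule Bochner_Integration.integral_diff) (use i1 i2 in auto)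
  also have "\<dots> = measure_pmf.expectation M f + measure_pmf.expectation M g - c"
    by (subst Bochner_Integration.integral_add[OF i1 i2]) simp
  finally show ?thesis .
qed

lemma exp_bounds:
  fixes f :: "'a \<Rightarrow> real"
  assumes "\<And>x. lo \<le> f x \<and> f x \<le> hi"
  shows "lo \<le> measure_pmf.expectation M f \<and> measure_pmf.expectation M f \<le> hi"
proof -
  have b: "\<And>x. \<bar>f x\<bar> \<le> \<bar>lo\<bar> + \<bar>hi\<bar>" using assms by (smt (verit))
  have i: "integrable (measure_pmf M) f" by (rule integrable_pmf_bounded[OF b])
  show ?thesis
    using measure_pmf.integral_ge_const[OF i, of lo] measure_pmf.integral_le_const[OF i, of hi] assms
    by auto
qed

lemma finite_bound: "\<exists>B. \<forall>x. \<bar>(f::'a::finite \<Rightarrow> real) x\<bar> \<le> B"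
  by (rule exI[of _ "Max (range (\<lambda>x. \<bar>f x\<bar>))"]) (auto intro: Max_ge)

theorem lemma3:
  fixes \<phi>X :: "'x::finite \<Rightarrow> real" and \<phi>Y :: "'y::finite \<Rightarrow> real"
    and lam K :: real and \<tau>p \<tau>m :: "'x pmf"
  assumes "0 \<le> lam" and "lam < 1"
    and "Min (range (phi_mixed \<phi>X \<phi>Y \<tau>p)) \<ge>
           (1 - lam) * Max (range (phi_mixed \<phi>X \<phi>Y \<tau>p)) + lam * Max (range (phi_mixed \<phi>X \<phi>Y \<tau>m))"
    and "Max (range (phi_mixed \<phi>X \<phi>Y \<tau>m)) \<le>
           lam * Min (range (phi_mixed \<phi>X \<phi>Y \<tau>p)) + (1 - lam) * Min (range (phi_mixed \<phi>X \<phi>Y \<tau>m))"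
    and "measure_pmf.expectation \<tau>m \<phi>X + Max (range \<phi>Y) \<le> K"
    and "K \<le> measure_pmf.expectation \<tau>p \<phi>X + Min (range \<phi>Y)"
  shows "\<exists>p0 pstar. p0 \<in> {0..1} \<and> (\<forall>y. pstar y \<in> {0..1}) \<and>
           autocratic (\<lambda>x y. \<phi>X x + \<phi>Y y - K) lam (reactive p0 pstar \<tau>p \<tau>m)"
proof -
  define a where "a = measure_pmf.expectation \<tau>p \<phi>X"
  define b where "b = measure_pmf.expectation \<tau>m \<phi>X"
  define My where "My = Max (range \<phi>Y)"
  define my where "my = Min (range \<phi>Y)"
  have yb: "my \<le> \<phi>Y y \<and> \<phi>Y y \<le> My" for y by (auto simp: my_def My_def)
  have mM: "my \<le> My" using yb by (meson order_trans)
  have c1: "a + my \<ge> (1-lam)*(a+My) + lam*(b+My)"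
    using assms(3) by (simp add: phi_mixed_eq mono_add_Min mono_add_Max a_def b_def my_def My_def)
  have key: "lam*b + My \<le> lam*a + my" using c1 by (simp add: algebra_simps)
  have Kb: "b + My \<le> K" "K \<le> a + my" using assms(5,6) by (simp_all add: a_def b_def my_def My_def)
  have ab: "b \<le> a" using Kb mM by linarith
  have lb: "(1-lam)*b \<le> (1-lam)*a" by (rule mult_left_mono) (use ab assms(2) in auto)
  define L where "L = max (lam*b + My) (K - (1-lam)*a)"
  have L1: "lam*b+My \<le> L" "L \<le> lam*a+my" "K-(1-lam)*a \<le> L" "L \<le> K-(1-lam)*b"
    using key Kb lb unfolding L_def by (auto simp: algebra_simps)
  define u0 where "u0 = (K - L)/(1-lam)"
  have u0: "b \<le> u0" "u0 \<le> a" "(1-lam)*u0 + L = K"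
    using L1 assms(2) unfolding u0_def by (auto simp: field_simps)
  define w where "w y = (if lam = 0 then b else (L - \<phi>Y y)/lam)" for y
  have w: "b \<le> w y \<and> w y \<le> a \<and> lam * w y + \<phi>Y y = L" for y
  proof (cases "lam = 0")
    case True
    then show ?thesis using L1 yb[of y] ab by (auto simp: w_def)
  next
    case False
    then have lp: "lam > 0" using assms(1) by auto
    have "lam * b \<le> L - \<phi>Y y" "L - \<phi>Y y \<le> lam * a" using L1 yb[of y] by auto
    then show ?thesis using lp by (auto simp: w_def field_simps)
  qed
  define pc where "pc v = (if a = b then 0 else (v - b)/(a-b))" for v
  have pc: "0 \<le> pc v \<and> pc v \<le> 1 \<and> pc v * a + (1 - pc v)*b = v" if "b \<le> v" "v \<le> a" for v
  proof (cases "a = b")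
    case True then show ?thesis using that by (auto simp: pc_def)
  next
    case False then have ne: "a - b > 0" using ab by auto
    have e: "pc v * (a - b) = v - b" using ne False by (simp add: pc_def)
    have "pc v * a + (1 - pc v)*b = b + pc v * (a - b)" by (simp add: algebra_simps)
    also have "\<dots> = v" using e by simp
    finally have "pc v * a + (1 - pc v)*b = v" .
    moreover have "0 \<le> pc v" "pc v \<le> 1" using ne that False by (auto simp: pc_def field_simps)
    ultimately show ?thesis by simp
  qed
  define p0 where "p0 = pc u0"
  define pstar where "pstar y = pc (w y)" for y
  show ?thesis
  proof (intro exI conjI allI)
    show "p0 \<in> {0..1}" using pc[OF u0(1,2)] by (simp add: p0_def)
    show "pstar y \<in> {0..1}" for y using pc[of "w y"] w[of y] by (simp add: pstar_def)
    show "autocratic (\<lambda>x y. \<phi>X x + \<phi>Y y - K) lam (reactive p0 pstar \<tau>p \<tau>m)"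
      unfolding autocratic_def
    proof
      fix \<sigma>Y :: "('x,'y) history \<Rightarrow> 'y pmf"
      define \<sigma>X where "\<sigma>X = reactive p0 pstar \<tau>p \<tau>m"
      have EX: "measure_pmf.expectation (\<sigma>X h) \<phi>X = (if h = [] then u0 else w (snd (last h)))" for h
      proof (cases "h = []")
        case True then show ?thesis
          using pc[OF u0(1,2)] by (simp add: \<sigma>X_def reactive_def mix_exp p0_def a_def b_def)
      next
        case False then show ?thesis
          using pc[of "w (snd (last h))"] w[of "snd (last h)"]
          by (simp add: \<sigma>X_def reactive_def mix_exp pstar_def a_def b_def)
      qed
      have EXb: "b \<le> measure_pmf.expectation (\<sigma>X h) \<phi>X \<and> measure_pmf.expectation (\<sigma>X h) \<phi>X \<le> a" for h
        using EX[of h] u0 w by auto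
      have EXabs: "\<bar>measure_pmf.expectation (\<sigma>X h) \<phi>X\<bar> \<le> \<bar>a\<bar> + \<bar>b\<bar>" for h
        using EXb[of h] by (smt (verit))
      obtain BX where BX: "\<And>x. \<bar>\<phi>X x\<bar> \<le> BX" using finite_bound by blast
      obtain BY where BY: "\<And>y. \<bar>\<phi>Y y\<bar> \<le> BY" using finite_bound by blast
      have EYabs: "\<bar>measure_pmf.expectation (\<sigma>Y h) \<phi>Y\<bar> \<le> BY" for h
        using exp_bounds[of "-BY" \<phi>Y "BY" "\<sigma>Y h"] BY by (smt (verit))
      define U where "U t = measure_pmf.expectation (hist_dist \<sigma>X \<sigma>Y t) (\<lambda>h. measure_pmf.expectation (\<sigma>X h) \<phi>X)" for t
      define V where "V t = measure_pmf.expectation (hist_dist \<sigma>X \<sigma>Y t) (\<lambda>h. measure_pmf.expectation (\<sigma>Y h) \<phi>Y)" for t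
      have Ub: "b \<le> U t \<and> U t \<le> a" for t
        unfolding U_def by (rule exp_bounds) (use EXb in auto)
      have round: "round_exp (\<lambda>x y. \<phi>X x + \<phi>Y y - K) \<sigma>X \<sigma>Y t = U t + V t - K" for t
      proof -
        have inner: "measure_pmf.expectation (\<sigma>X h) (\<lambda>x. measure_pmf.expectation (\<sigma>Y h) (\<lambda>y. \<phi>X x + \<phi>Y y - K))
            = measure_pmf.expectation (\<sigma>X h) \<phi>X + measure_pmf.expectation (\<sigma>Y h) \<phi>Y - K" for h
        proof -
          have "measure_pmf.expectation (\<sigma>Y h) (\<lambda>y. \<phi>X x + \<phi>Y y - K) = \<phi>X x + measure_pmf.expectation (\<sigma>Y h) \<phi>Y - K" for x
            using exp_lin[of "\<lambda>_. \<phi>X x" "\<bar>\<phi>X x\<bar>" \<phi>Y BY "\<sigma>Y h" K] BY by simp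
          then have "measure_pmf.expectation (\<sigma>X h) (\<lambda>x. measure_pmf.expectation (\<sigma>Y h) (\<lambda>y. \<phi>X x + \<phi>Y y - K))
             = measure_pmf.expectation (\<sigma>X h) (\<lambda>x. \<phi>X x + measure_pmf.expectation (\<sigma>Y h) \<phi>Y - K)" by simp
          also have "\<dots> = measure_pmf.expectation (\<sigma>X h) \<phi>X + measure_pmf.expectation (\<sigma>Y h) \<phi>Y - K"
            using exp_lin[of \<phi>X BX "\<lambda>_. measure_pmf.expectation (\<sigma>Y h) \<phi>Y" BY "\<sigma>X h" K] BX EYabs by simp
          finally show ?thesis .
        qed
        show ?thesis unfolding round_exp_def inner U_def V_def
          by (rule exp_lin[of _ "\<bar>a\<bar> + \<bar>b\<bar>" _ BY]) (use EXabs EYabs in auto)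
      qed
      have rel: "lam * U (Suc t) + V t = L" for t
      proof -
        have wabs: "\<bar>w y\<bar> \<le> \<bar>a\<bar> + \<bar>b\<bar>" for y using w[of y] by (smt (verit))
        have Ew: "\<bar>measure_pmf.expectation (\<sigma>Y h) w\<bar> \<le> \<bar>a\<bar> + \<bar>b\<bar>" for h
          using exp_bounds[of "b" w "a" "\<sigma>Y h"] w ab by (smt (verit))
        have "U (Suc t) = measure_pmf.expectation (hist_dist \<sigma>X \<sigma>Y t)
               (\<lambda>h. measure_pmf.expectation (\<sigma>X h) (\<lambda>x. measure_pmf.expectation (\<sigma>Y h) w))"
          unfolding U_def hist_dist.simps
          by (simp only: integral_bind_pmf_real[OF EXabs] expectation_return_pmf) (simp add: EX)
        also have "\<dots> = measure_pmf.expectation (hist_dist \<sigma>X \<sigma>Y t)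
               (\<lambda>h. measure_pmf.expectation (\<sigma>Y h) w)" by simp
        finally have U1: "U (Suc t) = \<dots>" .
        have "lam * U (Suc t) + V t = measure_pmf.expectation (hist_dist \<sigma>X \<sigma>Y t)
               (\<lambda>h. lam * measure_pmf.expectation (\<sigma>Y h) w + measure_pmf.expectation (\<sigma>Y h) \<phi>Y - 0)"
          unfolding U1 V_def
          by (subst exp_lin[of _ "\<bar>lam\<bar> * (\<bar>a\<bar> + \<bar>b\<bar>)" _ BY])
             (use EYabs Ew in \<open>auto simp: abs_mult intro: mult_left_mono\<close>)
        also have "\<dots> = measure_pmf.expectation (hist_dist \<sigma>X \<sigma>Y t) (\<lambda>h. L)"
        proof -
          have "lam * measure_pmf.expectation (\<sigma>Y h) w + measure_pmf.expectation (\<sigma>Y h) \<phi>Y - 0 = L" for h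
          proof -
            have "lam * measure_pmf.expectation (\<sigma>Y h) w + measure_pmf.expectation (\<sigma>Y h) \<phi>Y - 0
               = measure_pmf.expectation (\<sigma>Y h) (\<lambda>y. lam * w y + \<phi>Y y - 0)"
              by (subst exp_lin[of _ "\<bar>lam\<bar> * (\<bar>a\<bar> + \<bar>b\<bar>)" _ BY])
                 (use BY wabs in \<open>auto simp: abs_mult intro: mult_left_mono\<close>)
            also have "\<dots> = L" using w by simp
            finally show ?thesis .
          qed
          then show ?thesis by simp
        qed
        also have "\<dots> = L" by simp
        finally show ?thesis .
      qed
      have U0: "U 0 = u0" unfolding U_def by (simp add: EX)
      have lim: "(\<lambda>n. lam ^ n * U n) \<longlonglongrightarrow> 0"
      proof (rule Lim_null_comparison)
        show "\<forall>\<^sub>F n in sequentially. norm (lam ^ n * U n) \<le> lam ^ n * (\<bar>a\<bar> + \<bar>b\<bar>)"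
        proof (rule always_eventually, rule allI)
          fix n
          have "\<bar>U n\<bar> \<le> \<bar>a\<bar> + \<bar>b\<bar>" using Ub[of n] by (smt (verit))
          then show "norm (lam ^ n * U n) \<le> lam ^ n * (\<bar>a\<bar> + \<bar>b\<bar>)"
            using assms(1) by (auto simp: abs_mult intro: mult_left_mono)
        qed
        show "(\<lambda>n. lam ^ n * (\<bar>a\<bar> + \<bar>b\<bar>)) \<longlonglongrightarrow> 0"
          by (rule tendsto_mult_left_zero, rule LIMSEQ_power_zero) (use assms in auto)
      qed
      have s1: "(\<lambda>n. lam ^ n * U n - lam ^ Suc n * U (Suc n)) sums (U 0 - 0)"
        using telescope_sums'[OF lim] by simp
      have s2: "(\<lambda>n. lam ^ n * (L - K)) sums ((L - K) * (1 / (1 - lam)))"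
        using sums_mult2[OF geometric_sums[of lam]] assms(1,2) by (simp add: mult.commute)
      have "(\<lambda>n. (lam ^ n * U n - lam ^ Suc n * U (Suc n)) + lam ^ n * (L - K)) sums
             (U 0 - 0 + (L - K) * (1 / (1 - lam)))"
        by (rule sums_add[OF s1 s2])
      moreover have "(\<lambda>n. (lam ^ n * U n - lam ^ Suc n * U (Suc n)) + lam ^ n * (L - K)) =
             (\<lambda>t. lam ^ t * round_exp (\<lambda>x y. \<phi>X x + \<phi>Y y - K) \<sigma>X \<sigma>Y t)"
      proof
        fix n
        have e0: "lam ^ n * L = lam ^ n * (lam * U (Suc n) + V n)" using rel[of n] by simp
        have e: "lam ^ n * L = lam ^ Suc n * U (Suc n) + lam ^ n * V n"
          unfolding e0 by (simp add: algebra_simps)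
        show "(lam ^ n * U n - lam ^ Suc n * U (Suc n)) + lam ^ n * (L - K) =
             lam ^ n * round_exp (\<lambda>x y. \<phi>X x + \<phi>Y y - K) \<sigma>X \<sigma>Y n"
          unfolding round right_diff_distrib distrib_left using e by linarith
      qed
      ultimately have S: "(\<Sum>t. lam ^ t * round_exp (\<lambda>x y. \<phi>X x + \<phi>Y y - K) \<sigma>X \<sigma>Y t) =
             U 0 + (L - K) * (1 / (1 - lam))"
        by (simp add: sums_unique[symmetric])
      show "disc_payoff (\<lambda>x y. \<phi>X x + \<phi>Y y - K) lam (reactive p0 pstar \<tau>p \<tau>m) \<sigma>Y = 0"
      proof -
        have "U 0 + (L - K) * (1 / (1 - lam)) = ((1 - lam) * u0 + L - K) / (1 - lam)"
          using U0 assms(2) by (simp add: field_simps)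
        also have "\<dots> = 0" using u0(3) by simp
        finally show ?thesis unfolding disc_payoff_def \<sigma>X_def[symmetric] using S by simp
      qed
    qed
  qed
qed

end
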